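(* Let $G=(V,E)$ be a finite graph, $B \subset U \subset V$, and let $f$ be an $\mathcal F_B$-measurable function on $\mathcal S_V$. Let $\tilde V = V_1 \cup V_2$ be the vertex set of the disjoint union $\tilde G$ of two copies of $G$, let $\phi:\tilde V\to\tilde V$ be the natural involution exchanging each $x\in V_1$ with the corresponding vertex of $V_2$, let $U_1$ be $U$ regarded as a subset of $V_1$, and let $A = V_1 \setminus U_1$. For $\tilde\pi \in \mathcal S_{\tilde V}$ let $Q_A(\tilde\pi)$ be the minimal $\tilde\pi$-invariant set containing $A$ which is compatible with $\phi$ (i.e. $\phi(Q_A)=Q_A$). Then, regarding $B$ as a subset of $V_1$, $$\big|\mathbb E_{U}(f(\cdot\oplus\mathrm{id})) - \mathbb E_{V}(f)\big| \leq 2 \|f\|_{\infty}\, \mathbb P_{\tilde V}\big(Q_A \cap B \neq \emptyset \,\big|\, \tilde\pi|_A = \mathrm{id}\big).$$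
   Context: For any finite graph with vertex set $W$ and $U\subset W$, $\mathcal S_U$ is the set of bijections $\pi:U\to U$ with $\pi(x)=x$ or $\{x,\pi(x)\}$ an edge; $\mathbb P_U(\pi)=e^{-\alpha\sum_{x\in U}\mathbb 1\{\pi(x)\neq x\}}/Z(U)$, $\mathbb E_U$ its expectation. For $B\subset V$, $\mathcal F_B$ is the $\sigma$-algebra on $\mathcal S_V$ generated by the values $\pi(x),\pi^{-1}(x)$, $x\in B$. $\pi\oplus\mathrm{id}$ is the extension of $\pi\in\mathcal S_U$ by the identity outside $U$. A set $D$ is $\tilde\pi$-invariant if $\tilde\pi(D)=D$; such a minimal set $Q_A$ exists since intersections of $\tilde\pi$-invariant, $\phi$-compatible sets containing $A$ retain these properties. *)

theory Defs
  imports Complex_Main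
begin

text \<open>A permutation in S_U is represented as a function on the whole
  vertex type that is a bijection of U, is the identity outside U (so it coincides with
  its extension by the identity), and moves each x only to x itself or to a neighbour.\<close>

definition graph_on :: "'a set \<Rightarrow> ('a \<Rightarrow> 'a \<Rightarrow> bool) \<Rightarrow> bool" where
  "graph_on V E \<longleftrightarrow> finite V \<and> (\<forall>x y. E x y \<longrightarrow> x \<in> V \<and> y \<in> V)
     \<and> (\<forall>x y. E x y \<longrightarrow> E y x) \<and> (\<forall>x. \<not> E x x)"

definition perms :: "('a \<Rightarrow> 'a \<Rightarrow> bool) \<Rightarrow> 'a set \<Rightarrow> ('a \<Rightarrow> 'a) set" where
  "perms E U = {\<pi>. bij_betw \<pi> U U \<and> (\<forall>x. x \<notin> U \<longrightarrow> \<pi> x = x)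
                    \<and> (\<forall>x\<in>U. \<pi> x = x \<or> E x (\<pi> x))}"

definition weight :: "real \<Rightarrow> 'a set \<Rightarrow> ('a \<Rightarrow> 'a) \<Rightarrow> real" where
  "weight \<alpha> U \<pi> = exp (- \<alpha> * real (card {x\<in>U. \<pi> x \<noteq> x}))"

definition partfun :: "('a \<Rightarrow> 'a \<Rightarrow> bool) \<Rightarrow> real \<Rightarrow> 'a set \<Rightarrow> real" where
  "partfun E \<alpha> U = (\<Sum>\<pi>\<in>perms E U. weight \<alpha> U \<pi>)"

definition expect :: "('a \<Rightarrow> 'a \<Rightarrow> bool) \<Rightarrow> real \<Rightarrow> 'a set \<Rightarrow> (('a \<Rightarrow> 'a) \<Rightarrow> real) \<Rightarrow> real" where
  "expect E \<alpha> U g = (\<Sum>\<pi>\<in>perms E U. g \<pi> * weight \<alpha> U \<pi>) / partfun E \<alpha> U"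

definition prob_ev :: "('a \<Rightarrow> 'a \<Rightarrow> bool) \<Rightarrow> real \<Rightarrow> 'a set \<Rightarrow> (('a \<Rightarrow> 'a) \<Rightarrow> bool) \<Rightarrow> real" where
  "prob_ev E \<alpha> U P = (\<Sum>\<pi>\<in>{\<pi>\<in>perms E U. P \<pi>}. weight \<alpha> U \<pi>) / partfun E \<alpha> U"

definition cond_prob :: "('a \<Rightarrow> 'a \<Rightarrow> bool) \<Rightarrow> real \<Rightarrow> 'a set \<Rightarrow> (('a \<Rightarrow> 'a) \<Rightarrow> bool)
     \<Rightarrow> (('a \<Rightarrow> 'a) \<Rightarrow> bool) \<Rightarrow> real" where
  "cond_prob E \<alpha> U P C = prob_ev E \<alpha> U (\<lambda>\<pi>. P \<pi> \<and> C \<pi>) / prob_ev E \<alpha> U C"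

text \<open>f is F_B-measurable on S_V: it depends only on the values pi(x), pi^{-1}(x), x in B.\<close>
definition measurable_B :: "('a \<Rightarrow> 'a \<Rightarrow> bool) \<Rightarrow> 'a set \<Rightarrow> 'a set \<Rightarrow> (('a \<Rightarrow> 'a) \<Rightarrow> real) \<Rightarrow> bool" where
  "measurable_B E V B f \<longleftrightarrow> (\<forall>\<pi>\<in>perms E V. \<forall>\<sigma>\<in>perms E V.
      (\<forall>x\<in>B. \<pi> x = \<sigma> x \<and> inv \<pi> x = inv \<sigma> x) \<longrightarrow> f \<pi> = f \<sigma>)"

definition sup_norm :: "('a \<Rightarrow> 'a \<Rightarrow> bool) \<Rightarrow> 'a set \<Rightarrow> (('a \<Rightarrow> 'a) \<Rightarrow> real) \<Rightarrow> real" where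
  "sup_norm E V f = Max ((\<lambda>\<pi>. \<bar>f \<pi>\<bar>) ` perms E V)"

text \<open>Disjoint union of two copies of G: vertex (x, True) is in copy V_1, (x, False) in V_2.\<close>
definition dbl_V :: "'a set \<Rightarrow> ('a \<times> bool) set" where
  "dbl_V V = V \<times> UNIV"

definition dbl_E :: "('a \<Rightarrow> 'a \<Rightarrow> bool) \<Rightarrow> 'a \<times> bool \<Rightarrow> 'a \<times> bool \<Rightarrow> bool" where
  "dbl_E E p q = (snd p = snd q \<and> E (fst p) (fst q))"

definition swap_copy :: "'a \<times> bool \<Rightarrow> 'a \<times> bool" where
  "swap_copy p = (fst p, \<not> snd p)"

definition Q_set :: "'b set \<Rightarrow> ('b \<Rightarrow> 'b) \<Rightarrow> 'b set \<Rightarrow> ('b \<Rightarrow> 'b) \<Rightarrow> 'b set" where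
  "Q_set W \<phi> A \<pi> = \<Inter>{D. D \<subseteq> W \<and> A \<subseteq> D \<and> \<pi> ` D = D \<and> \<phi> ` D = D}"

end

theory Submission
  imports Defs
begin


lemma perms_bij:
  assumes "\<pi> \<in> perms E U" shows "bij \<pi>"
proof -
  have b: "bij_betw \<pi> U U" and o: "\<And>x. x \<notin> U \<Longrightarrow> \<pi> x = x" using assms by (auto simp: perms_def)
  have "inj \<pi>"
  proof (rule injI)
    fix a b assume e: "\<pi> a = \<pi> b"
    show "a = b"
    proof (cases "a \<in> U"; cases "b \<in> U")
      assume "a \<in> U" "b \<in> U" then show ?thesis using e b by (auto simp: bij_betw_def inj_on_def)
    next
      assume "a \<in> U" "b \<notin> U" then show ?thesis using e b o by (metis bij_betwE)
    next
      assume "a \<notin> U" "b \<in> U" then show ?thesis using e b o by (metis bij_betwE)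
    next
      assume "a \<notin> U" "b \<notin> U" then show ?thesis using e o by metis
    qed
  qed
  moreover have "surj \<pi>"
  proof -
    { fix y have "y \<in> range \<pi>"
      proof (cases "y \<in> U")
        case True then show ?thesis using b by (metis bij_betw_imp_surj_on imageE rangeI)
      next
        case False then show ?thesis using o by (metis rangeI)
      qed }
    then show ?thesis by auto
  qed
  ultimately show ?thesis by (simp add: bij_def)
qed

lemma perms_mono:
  assumes "\<pi> \<in> perms E U" "U \<subseteq> V" "finite V" shows "\<pi> \<in> perms E V"
proof -
  have b: "bij_betw \<pi> U U" and o: "\<And>x. x \<notin> U \<Longrightarrow> \<pi> x = x"
    and ed: "\<And>x. x \<in> U \<Longrightarrow> \<pi> x = x \<or> E x (\<pi> x)" using assms by (auto simp: perms_def)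
  have "inj \<pi>" using perms_bij[OF assms(1)] by (simp add: bij_def)
  moreover have "\<pi> ` V \<subseteq> V" using b o assms(2) by (metis bij_betwE image_subsetI subsetD)
  ultimately have "\<pi> ` V = V" using endo_inj_surj[OF assms(3)] by (metis inj_on_subset subset_UNIV)
  then have "bij_betw \<pi> V V" using \<open>inj \<pi>\<close> by (metis bij_betw_def inj_on_subset subset_UNIV)
  then show ?thesis using o ed assms(2) by (auto simp: perms_def)
qed

lemma finite_perms:
  assumes "finite U" shows "finite (perms E U)"
proof -
  let ?g = "\<lambda>\<pi> x. if x \<in> U then \<pi> x else undefined"
  have "inj_on ?g (perms E U)"
  proof (rule inj_onI)
    fix p q assume p: "p \<in> perms E U" and q: "q \<in> perms E U" and e: "?g p = ?g q"
    show "p = q"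
    proof
      fix x show "p x = q x"
        using p q fun_cong[OF e, of x] by (cases "x \<in> U") (auto simp: perms_def)
    qed
  qed
  moreover have "?g ` perms E U \<subseteq> {f. \<forall>x. (x \<in> U \<longrightarrow> f x \<in> U) \<and> (x \<notin> U \<longrightarrow> f x = undefined)}"
    by (auto simp: perms_def bij_betw_def)
  ultimately show ?thesis
    using finite_set_of_finite_funs[OF assms assms, of undefined]
    by (meson finite_imageD finite_subset)
qed

lemma id_perms: "id \<in> perms E U"
  by (simp add: perms_def)

lemma weight_pos: "weight \<alpha> U \<pi> > 0" by (simp add: weight_def)

lemma partfun_pos: assumes "finite U" shows "partfun E \<alpha> U > 0"
  unfolding partfun_def
  by (rule sum_pos2[OF finite_perms[OF assms] id_perms]) (auto simp: weight_pos less_imp_le)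




definition cpy :: "bool \<Rightarrow> ('a \<times> bool \<Rightarrow> 'a \<times> bool) \<Rightarrow> 'a \<Rightarrow> 'a" where
  "cpy b \<sigma> x = fst (\<sigma> (x, b))"

definition joinp :: "('a \<Rightarrow> 'a) \<Rightarrow> ('a \<Rightarrow> 'a) \<Rightarrow> 'a \<times> bool \<Rightarrow> 'a \<times> bool" where
  "joinp p1 p2 z = ((if snd z then p1 (fst z) else p2 (fst z)), snd z)"

lemma snd_pres:
  assumes "\<sigma> \<in> perms (dbl_E E) (dbl_V V)" shows "snd (\<sigma> z) = snd z"
proof (cases "z \<in> dbl_V V")
  case True then show ?thesis using assms by (auto simp: perms_def dbl_E_def)
next
  case False then have "\<sigma> z = z" using assms by (cases z) (auto simp: perms_def)
  then show ?thesis by simp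
qed

lemma cpy_eq:
  assumes "\<sigma> \<in> perms (dbl_E E) (dbl_V V)" shows "\<sigma> (x, b) = (cpy b \<sigma> x, b)"
  using snd_pres[OF assms, of "(x,b)"] by (simp add: cpy_def prod_eq_iff)

lemma cpy_perms:
  assumes g: "graph_on V E" and X: "X \<subseteq> V" and s: "\<sigma> \<in> perms (dbl_E E) (dbl_V V)"
    and fx: "\<forall>x\<in>V-X. \<sigma> (x,b) = (x,b)"
  shows "cpy b \<sigma> \<in> perms E X"
proof -
  have fin: "finite V" using g by (simp add: graph_on_def)
  have bs: "bij_betw \<sigma> (dbl_V V) (dbl_V V)" and os: "\<And>z. z \<notin> dbl_V V \<Longrightarrow> \<sigma> z = z"
    and es: "\<And>z. z \<in> dbl_V V \<Longrightarrow> \<sigma> z = z \<or> dbl_E E z (\<sigma> z)" using s by (auto simp: perms_def)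
  have ce: "\<And>x. \<sigma> (x,b) = (cpy b \<sigma> x, b)" using cpy_eq[OF s] .
  have out: "cpy b \<sigma> x = x" if "x \<notin> X" for x
  proof (cases "x \<in> V")
    case True then show ?thesis using fx that by (simp add: cpy_def)
  next
    case False then show ?thesis using os[of "(x,b)"] by (simp add: cpy_def dbl_V_def)
  qed
  have inV: "cpy b \<sigma> x \<in> V" if "x \<in> V" for x
    using bij_betwE[OF bs] that by (auto simp: cpy_def dbl_V_def mem_Times_iff)
  have inj: "inj_on (cpy b \<sigma>) V"
  proof (rule inj_onI)
    fix x y assume "x \<in> V" "y \<in> V" "cpy b \<sigma> x = cpy b \<sigma> y"
    then have "\<sigma> (x,b) = \<sigma> (y,b)" using ce by simp
    moreover have "(x,b) \<in> dbl_V V" "(y,b) \<in> dbl_V V" using \<open>x \<in> V\<close> \<open>y \<in> V\<close> by (auto simp: dbl_V_def)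
    ultimately show "x = y" using bs by (auto simp: bij_betw_def inj_on_def)
  qed
  have mapX: "cpy b \<sigma> x \<in> X" if "x \<in> X" for x
  proof (rule ccontr)
    assume n: "cpy b \<sigma> x \<notin> X"
    have "cpy b \<sigma> (cpy b \<sigma> x) = cpy b \<sigma> x" using out[OF n] .
    then have "cpy b \<sigma> x = x" using inj inV X that by (meson inj_onD subsetD)
    then show False using n that by simp
  qed
  have injX: "inj_on (cpy b \<sigma>) X" using inj X inj_on_subset by blast
  have "cpy b \<sigma> ` X = X" using endo_inj_surj[OF finite_subset[OF X fin] _ injX] mapX by blast
  then have "bij_betw (cpy b \<sigma>) X X" using injX by (simp add: bij_betw_def)
  moreover have "cpy b \<sigma> x = x \<or> E x (cpy b \<sigma> x)" if "x \<in> X" for x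
  proof -
    have "(x,b) \<in> dbl_V V" using that X by (auto simp: dbl_V_def)
    then show ?thesis using es[of "(x,b)"] ce[of x] by (auto simp: dbl_E_def)
  qed
  ultimately show ?thesis using out by (auto simp: perms_def)
qed

lemma joinp_perms:
  assumes g: "graph_on V E" and p1: "p1 \<in> perms E V" and p2: "p2 \<in> perms E V"
  shows "joinp p1 p2 \<in> perms (dbl_E E) (dbl_V V)"
proof -
  have fin: "finite (dbl_V V)" using g by (simp add: graph_on_def dbl_V_def)
  have pb: "\<And>b x. x \<in> V \<Longrightarrow> (if b then p1 x else p2 x) \<in> V"
    using p1 p2 by (auto simp: perms_def bij_betw_def)
  have po: "\<And>b x. x \<notin> V \<Longrightarrow> (if b then p1 x else p2 x) = x"
    using p1 p2 by (auto simp: perms_def)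
  have pe: "\<And>b x. x \<in> V \<Longrightarrow> (if b then p1 x else p2 x) = x \<or> E x (if b then p1 x else p2 x)"
    using p1 p2 by (auto simp: perms_def)
  have inj1: "inj p1" "inj p2" using perms_bij[OF p1] perms_bij[OF p2] by (auto simp: bij_def)
  have inj: "inj (joinp p1 p2)"
    by (rule injI) (auto simp: joinp_def prod_eq_iff split: if_splits dest: injD[OF inj1(1)] injD[OF inj1(2)])
  have sub: "joinp p1 p2 ` dbl_V V \<subseteq> dbl_V V"
    using pb by (auto simp: joinp_def dbl_V_def)
  have "joinp p1 p2 ` dbl_V V = dbl_V V"
    using endo_inj_surj[OF fin sub] inj inj_on_subset by blast
  then have "bij_betw (joinp p1 p2) (dbl_V V) (dbl_V V)" using inj by (metis bij_betw_def inj_on_subset subset_UNIV)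
  moreover have "joinp p1 p2 z = z" if "z \<notin> dbl_V V" for z
    using po[of "fst z" "snd z"] that by (auto simp: joinp_def dbl_V_def prod_eq_iff mem_Times_iff)
  moreover have "joinp p1 p2 z = z \<or> dbl_E E z (joinp p1 p2 z)" if "z \<in> dbl_V V" for z
    using pe[of "fst z" "snd z"] that by (auto simp: joinp_def dbl_V_def dbl_E_def prod_eq_iff)
  ultimately show ?thesis by (auto simp: perms_def)
qed

lemma cpy_joinp: "cpy b (joinp p1 p2) = (if b then p1 else p2)"
  by (auto simp: cpy_def joinp_def)

lemma joinp_cpy:
  assumes "\<sigma> \<in> perms (dbl_E E) (dbl_V V)" shows "joinp (cpy True \<sigma>) (cpy False \<sigma>) = \<sigma>"
proof
  fix z show "joinp (cpy True \<sigma>) (cpy False \<sigma>) z = \<sigma> z"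
    using cpy_eq[OF assms, of "fst z" "snd z"] by (cases z; cases "snd z") (auto simp: joinp_def)
qed




lemma Q_props:
  assumes fin: "finite W" and bs: "bij_betw \<sigma> W W" and ph: "\<phi> ` W = W" and ij: "inj \<phi>"
    and AW: "A \<subseteq> W"
  shows "Q_set W \<phi> A \<sigma> \<subseteq> W" "A \<subseteq> Q_set W \<phi> A \<sigma>" "\<sigma> ` Q_set W \<phi> A \<sigma> = Q_set W \<phi> A \<sigma>"
    "\<phi> ` Q_set W \<phi> A \<sigma> = Q_set W \<phi> A \<sigma>"
    "\<And>D. D \<subseteq> W \<Longrightarrow> A \<subseteq> D \<Longrightarrow> \<sigma> ` D = D \<Longrightarrow> \<phi> ` D = D \<Longrightarrow> Q_set W \<phi> A \<sigma> \<subseteq> D"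
proof -
  let ?C = "{D. D \<subseteq> W \<and> A \<subseteq> D \<and> \<sigma> ` D = D \<and> \<phi> ` D = D}"
  have Q: "Q_set W \<phi> A \<sigma> = \<Inter>?C" by (simp add: Q_set_def)
  have WC: "W \<in> ?C" using AW bs ph by (simp add: bij_betw_def)
  show QW: "Q_set W \<phi> A \<sigma> \<subseteq> W" unfolding Q using WC by blast
  show "A \<subseteq> Q_set W \<phi> A \<sigma>" unfolding Q by blast
  show "\<And>D. D \<subseteq> W \<Longrightarrow> A \<subseteq> D \<Longrightarrow> \<sigma> ` D = D \<Longrightarrow> \<phi> ` D = D \<Longrightarrow> Q_set W \<phi> A \<sigma> \<subseteq> D"
    unfolding Q by blast
  have finQ: "finite (Q_set W \<phi> A \<sigma>)" using finite_subset[OF QW fin] .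
  have s1: "\<sigma> ` Q_set W \<phi> A \<sigma> \<subseteq> Q_set W \<phi> A \<sigma>" unfolding Q by blast
  have i1: "inj_on \<sigma> (Q_set W \<phi> A \<sigma>)" using bs QW by (meson bij_betw_def inj_on_subset)
  show "\<sigma> ` Q_set W \<phi> A \<sigma> = Q_set W \<phi> A \<sigma>" using endo_inj_surj[OF finQ s1 i1] .
  have s2: "\<phi> ` Q_set W \<phi> A \<sigma> \<subseteq> Q_set W \<phi> A \<sigma>" unfolding Q by blast
  have i2: "inj_on \<phi> (Q_set W \<phi> A \<sigma>)" using ij by (meson inj_on_subset subset_UNIV)
  show "\<phi> ` Q_set W \<phi> A \<sigma> = Q_set W \<phi> A \<sigma>" using endo_inj_surj[OF finQ s2 i2] .
qed

lemma swap_swap[simp]: "swap_copy (swap_copy z) = z" by (simp add: swap_copy_def)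
lemma inj_swap: "inj swap_copy" by (metis injI swap_swap)
lemma swap_W: "swap_copy ` dbl_V V = dbl_V V"
  by (auto simp: swap_copy_def dbl_V_def image_iff mem_Times_iff intro!: exI[of _ "(a, \<not> b)" for a b])
lemma swap_in_W[simp]: "swap_copy z \<in> dbl_V V \<longleftrightarrow> z \<in> dbl_V V"
  by (simp add: swap_copy_def dbl_V_def mem_Times_iff)
lemma swap_eq_iff: "swap_copy a = z \<longleftrightarrow> a = swap_copy z" by (auto simp: swap_copy_def)
lemma dbl_E_swap: "dbl_E E (swap_copy z) (swap_copy y) = dbl_E E z y"
  by (simp add: swap_copy_def dbl_E_def)

definition Tmap :: "('a \<times> bool) set \<Rightarrow> ('a \<times> bool) set \<Rightarrow> ('a \<times> bool \<Rightarrow> 'a \<times> bool) \<Rightarrow> 'a \<times> bool \<Rightarrow> 'a \<times> bool" where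
  "Tmap W A \<sigma> z = (if z \<in> Q_set W swap_copy A \<sigma> then \<sigma> z else swap_copy (\<sigma> (swap_copy z)))"

context
  fixes V :: "'a set" and E A \<sigma>
  assumes finV: "finite V" and AW: "A \<subseteq> dbl_V V" and sP: "\<sigma> \<in> perms (dbl_E E) (dbl_V V)"
begin

abbreviation "W \<equiv> dbl_V V"
abbreviation "Q \<equiv> Q_set W swap_copy A \<sigma>"
abbreviation "T \<equiv> Tmap W A \<sigma>"

lemma finW: "finite W" using finV by (simp add: dbl_V_def)
lemma bsig: "bij_betw \<sigma> W W" using sP by (simp add: perms_def)
lemma osig: "z \<notin> W \<Longrightarrow> \<sigma> z = z" using sP by (cases z) (auto simp: perms_def)
lemma esig: "z \<in> W \<Longrightarrow> \<sigma> z = z \<or> dbl_E E z (\<sigma> z)" using sP by (auto simp: perms_def)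

lemmas QP = Q_props[OF finW bsig swap_W inj_swap AW]

lemma Q_sig: "z \<in> W \<Longrightarrow> \<sigma> z \<in> Q \<longleftrightarrow> z \<in> Q"
proof
  assume z: "z \<in> W" and "\<sigma> z \<in> Q"
  then obtain y where y: "y \<in> Q" "\<sigma> y = \<sigma> z" using QP(3) by (metis imageE)
  then have "y \<in> W" using QP(1) by blast
  then have "y = z" using y z bsig by (auto simp: bij_betw_def inj_on_def)
  then show "z \<in> Q" using y by simp
next
  assume "z \<in> Q" then show "\<sigma> z \<in> Q" using QP(3) by blast
qed

lemma Q_swap: "swap_copy z \<in> Q \<longleftrightarrow> z \<in> Q"
proof
  assume "swap_copy z \<in> Q"
  then have "swap_copy (swap_copy z) \<in> Q" using QP(4) by blast
  then show "z \<in> Q" by simp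
next
  assume "z \<in> Q" then show "swap_copy z \<in> Q" using QP(4) by blast
qed

lemma sig_W: "z \<in> W \<Longrightarrow> \<sigma> z \<in> W" using bsig by (meson bij_betwE)

lemma T_in: "z \<in> W \<Longrightarrow> T z \<in> W"
  by (auto simp: Tmap_def sig_W)

lemma T_perm: "T \<in> perms (dbl_E E) W"
proof -
  have inj: "inj_on T W"
  proof (rule inj_onI)
    fix a b assume a: "a \<in> W" and b: "b \<in> W" and e: "T a = T b"
    have ia: "\<sigma> a = \<sigma> b \<Longrightarrow> a = b" if "a \<in> W" "b \<in> W" for a b
      using bsig that by (auto simp: bij_betw_def inj_on_def)
    show "a = b"
    proof (cases "a \<in> Q"; cases "b \<in> Q")
      assume "a \<in> Q" "b \<in> Q" then show ?thesis using e ia a b by (simp add: Tmap_def)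
    next
      assume "a \<notin> Q" "b \<notin> Q"
      then have "swap_copy (\<sigma> (swap_copy a)) = swap_copy (\<sigma> (swap_copy b))" using e by (simp add: Tmap_def)
      then have "\<sigma> (swap_copy a) = \<sigma> (swap_copy b)" by (metis swap_swap)
      then have "swap_copy a = swap_copy b" using ia a b by simp
      then show ?thesis by (metis swap_swap)
    next
      assume "a \<in> Q" "b \<notin> Q"
      then have "\<sigma> a \<in> Q" "swap_copy (\<sigma> (swap_copy b)) \<notin> Q"
        using Q_sig Q_swap a b by auto
      then show ?thesis using e \<open>a \<in> Q\<close> \<open>b \<notin> Q\<close> by (simp add: Tmap_def)
    next
      assume "a \<notin> Q" "b \<in> Q"
      then have "\<sigma> b \<in> Q" "swap_copy (\<sigma> (swap_copy a)) \<notin> Q"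
        using Q_sig Q_swap a b by auto
      then show ?thesis using e \<open>b \<in> Q\<close> \<open>a \<notin> Q\<close> by (simp add: Tmap_def)
    qed
  qed
  have sub: "T ` W \<subseteq> W" using T_in by blast
  have "bij_betw T W W" using endo_inj_surj[OF finW sub inj] inj by (simp add: bij_betw_def)
  moreover have "T z = z" if "z \<notin> W" for z
  proof -
    have "z \<notin> Q" using that QP(1) by blast
    then show ?thesis using that osig[of "swap_copy z"] by (simp add: Tmap_def)
  qed
  moreover have "T z = z \<or> dbl_E E z (T z)" if "z \<in> W" for z
  proof (cases "z \<in> Q")
    case True then show ?thesis using esig[OF that] by (simp add: Tmap_def)
  next
    case False
    have "\<sigma> (swap_copy z) = swap_copy z \<or> dbl_E E (swap_copy z) (\<sigma> (swap_copy z))"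
      using esig that by simp
    then show ?thesis
    proof
      assume "\<sigma> (swap_copy z) = swap_copy z" then show ?thesis using False by (simp add: Tmap_def)
    next
      assume h: "dbl_E E (swap_copy z) (\<sigma> (swap_copy z))"
      have "dbl_E E z (swap_copy (\<sigma> (swap_copy z)))"
        using dbl_E_swap[of E z "swap_copy (\<sigma> (swap_copy z))"] h by simp
      then show ?thesis using False by (simp add: Tmap_def)
    qed
  qed
  ultimately show ?thesis by (auto simp: perms_def)
qed

lemma T_fix: "\<forall>z\<in>A. \<sigma> z = z \<Longrightarrow> \<forall>z\<in>A. T z = z"
  using QP(2) by (auto simp: Tmap_def)

lemma T_Q: "Q_set W swap_copy A T = Q"
proof -
  have bT: "bij_betw T W W" using T_perm by (simp add: perms_def)
  note QT = Q_props[OF finW bT swap_W inj_swap AW]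
  have TQ: "T ` Q = Q" using QP(3) by (simp add: Tmap_def cong: image_cong)
  have 1: "Q_set W swap_copy A T \<subseteq> Q" by (rule QT(5)[OF QP(1) QP(2) TQ QP(4)])
  have "\<sigma> ` Q_set W swap_copy A T = Q_set W swap_copy A T"
  proof -
    have "\<sigma> ` Q_set W swap_copy A T = T ` Q_set W swap_copy A T"
      using 1 by (auto simp: Tmap_def cong: image_cong)
    then show ?thesis using QT(3) by simp
  qed
  then have 2: "Q \<subseteq> Q_set W swap_copy A T" by (rule QP(5)[OF QT(1) QT(2) _ QT(4)])
  show ?thesis using 1 2 by blast
qed

lemma T_T: "Tmap W A T = \<sigma>"
proof
  fix z show "Tmap W A T z = \<sigma> z"
  proof (cases "z \<in> Q")
    case True then show ?thesis by (simp add: Tmap_def T_Q)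
  next
    case False
    then have "swap_copy z \<notin> Q" using Q_swap by simp
    then show ?thesis using False by (simp add: Tmap_def T_Q)
  qed
qed

lemma T_weight: "weight \<alpha> W T = weight \<alpha> W \<sigma>"
proof -
  define h where "h z = (if z \<in> Q then z else swap_copy z)" for z
  have hh: "h (h z) = z" for z using Q_swap by (simp add: h_def)
  have injh: "inj h" by (metis injI hh)
  have "{z \<in> W. T z \<noteq> z} = h ` {z \<in> W. \<sigma> z \<noteq> z}"
  proof (rule set_eqI)
    fix z
    have hW: "h z \<in> W \<longleftrightarrow> z \<in> W" by (simp add: h_def)
    have key: "T z \<noteq> z \<longleftrightarrow> \<sigma> (h z) \<noteq> h z"
      by (cases "z \<in> Q") (simp_all add: Tmap_def h_def swap_eq_iff)
    have im: "z \<in> h ` S \<longleftrightarrow> h z \<in> S" for S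
    proof
      assume "z \<in> h ` S" then obtain y where "y \<in> S" "z = h y" by blast
      then show "h z \<in> S" using hh by simp
    next
      assume "h z \<in> S" then show "z \<in> h ` S" using rev_image_eqI[of "h z" S z h] hh by simp
    qed
    show "z \<in> {z \<in> W. T z \<noteq> z} \<longleftrightarrow> z \<in> h ` {z \<in> W. \<sigma> z \<noteq> z}"
      unfolding im using hW key by simp
  qed
  then have "card {z \<in> W. T z \<noteq> z} = card {z \<in> W. \<sigma> z \<noteq> z}"
    using injh by (simp add: card_image inj_on_subset)
  then show ?thesis by (simp add: weight_def)
qed

lemma T_cpy:
  assumes "(x, True) \<notin> Q"
  shows "cpy True T x = cpy False \<sigma> x" "cpy False T x = cpy True \<sigma> x"
proof -
  have n2: "(x, False) \<notin> Q" using assms Q_swap[of "(x,False)"] by (simp add: swap_copy_def)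
  show "cpy True T x = cpy False \<sigma> x" using assms by (simp add: cpy_def Tmap_def swap_copy_def)
  show "cpy False T x = cpy True \<sigma> x" using n2 by (simp add: cpy_def Tmap_def swap_copy_def)
qed

end




lemma weight_split:
  assumes g: "graph_on V E" and UV: "U \<subseteq> V" and s: "\<sigma> \<in> perms (dbl_E E) (dbl_V V)"
    and p1: "cpy True \<sigma> \<in> perms E U"
  shows "weight \<alpha> (dbl_V V) \<sigma> = weight \<alpha> U (cpy True \<sigma>) * weight \<alpha> V (cpy False \<sigma>)"
proof -
  have fin: "finite V" using g by (simp add: graph_on_def)
  have o1: "\<And>x. x \<notin> U \<Longrightarrow> cpy True \<sigma> x = x" using p1 by (simp add: perms_def)
  let ?A1 = "{x \<in> U. cpy True \<sigma> x \<noteq> x}" and ?A2 = "{x \<in> V. cpy False \<sigma> x \<noteq> x}"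
  have eq: "{z \<in> dbl_V V. \<sigma> z \<noteq> z} = (\<lambda>x. (x, True)) ` ?A1 \<union> (\<lambda>x. (x, False)) ` ?A2"
  proof (rule set_eqI)
    fix z show "z \<in> {z \<in> dbl_V V. \<sigma> z \<noteq> z} \<longleftrightarrow> z \<in> (\<lambda>x. (x, True)) ` ?A1 \<union> (\<lambda>x. (x, False)) ` ?A2"
    proof (cases z)
      case (Pair a b)
      have e: "\<sigma> (a,b) = (cpy b \<sigma> a, b)" using cpy_eq[OF s, of a b] .
      show ?thesis
      proof (cases b)
        case True
        have "a \<in> U \<Longrightarrow> a \<in> V" using UV by blast
        then show ?thesis using Pair True e o1[of a] by (auto simp: dbl_V_def mem_Times_iff)
      next
        case False
        then show ?thesis using Pair e by (auto simp: dbl_V_def mem_Times_iff)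
      qed
    qed
  qed
  have f1: "finite ?A1" using finite_subset[OF UV fin] by simp
  have f2: "finite ?A2" using fin by simp
  have "card {z \<in> dbl_V V. \<sigma> z \<noteq> z} = card ?A1 + card ?A2"
    unfolding eq
    by (subst card_Un_disjoint) (auto simp: f1 f2 card_image inj_on_def)
  then show ?thesis by (simp add: weight_def exp_add[symmetric] algebra_simps)
qed

lemma key_f:
  assumes g: "graph_on V E" and AW: "A \<subseteq> dbl_V V" and s: "\<sigma> \<in> perms (dbl_E E) (dbl_V V)"
    and nb: "Q_set (dbl_V V) swap_copy A \<sigma> \<inter> (B \<times> {True}) = {}"
    and m: "measurable_B E V B f"
  shows "f (cpy True (Tmap (dbl_V V) A \<sigma>)) = f (cpy False \<sigma>)"
proof -
  have fin: "finite V" using g by (simp add: graph_on_def)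
  let ?Q = "Q_set (dbl_V V) swap_copy A \<sigma>"
  let ?T = "Tmap (dbl_V V) A \<sigma>"
  have Tp: "?T \<in> perms (dbl_E E) (dbl_V V)" using T_perm[OF fin AW s] .
  have p: "cpy True ?T \<in> perms E V" by (rule cpy_perms[OF g subset_refl Tp]) simp
  have q: "cpy False \<sigma> \<in> perms E V" by (rule cpy_perms[OF g subset_refl s]) simp
  have bp: "bij (cpy True ?T)" and bq: "bij (cpy False \<sigma>)" using perms_bij p q by auto
  have "cpy True ?T x = cpy False \<sigma> x \<and> inv (cpy True ?T) x = inv (cpy False \<sigma>) x" if x: "x \<in> B" for x
  proof
    have nx: "(x, True) \<notin> ?Q" using nb x by blast
    show "cpy True ?T x = cpy False \<sigma> x" using T_cpy(1)[OF fin AW s nx] .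
    define y where "y = inv (cpy False \<sigma>) x"
    have y: "cpy False \<sigma> y = x" unfolding y_def using bq by (simp add: bij_def surj_f_inv_f)
    have nx2: "(x, False) \<notin> ?Q" using nx Q_swap[OF fin AW s, of "(x,False)"] by (simp add: swap_copy_def)
    have sy: "\<sigma> (y, False) = (x, False)" using cpy_eq[OF s, of y False] y by simp
    have "(y, False) \<notin> ?Q"
    proof
      assume "(y, False) \<in> ?Q"
      then have "\<sigma> (y, False) \<in> ?Q" using QP(3)[OF fin AW s] by blast
      then show False using sy nx2 by simp
    qed
    then have ny: "(y, True) \<notin> ?Q" using Q_swap[OF fin AW s, of "(y,True)"] by (simp add: swap_copy_def)
    have "cpy True ?T y = x" using T_cpy(1)[OF fin AW s ny] y by simp
    then have "inv (cpy True ?T) x = y" using bp by (simp add: bij_def inv_f_eq)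
    then show "inv (cpy True ?T) x = inv (cpy False \<sigma>) x" by (simp add: y_def)
  qed
  then have "\<forall>x\<in>B. cpy True ?T x = cpy False \<sigma> x \<and> inv (cpy True ?T) x = inv (cpy False \<sigma>) x" by blast
  then show ?thesis using m p q unfolding measurable_B_def by blast
qed




theorem proposition4p3:
  fixes V U B :: "'a set" and E :: "'a \<Rightarrow> 'a \<Rightarrow> bool" and \<alpha> :: real
    and f :: "('a \<Rightarrow> 'a) \<Rightarrow> real"
  assumes "graph_on V E"
    and "B \<subseteq> U" and "U \<subseteq> V"
    and "measurable_B E V B f"
  shows "\<bar>expect E \<alpha> U f - expect E \<alpha> V f\<bar>
    \<le> 2 * sup_norm E V f *
       cond_prob (dbl_E E) \<alpha> (dbl_V V)
         (\<lambda>\<pi>. Q_set (dbl_V V) swap_copy ((V - U) \<times> {True}) \<pi> \<inter> (B \<times> {True}) \<noteq> {})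
         (\<lambda>\<pi>. \<forall>z\<in>(V - U) \<times> {True}. \<pi> z = z)"
proof -
  note g = assms(1) and BU = assms(2) and UV = assms(3) and m = assms(4)
  have fin: "finite V" using g by (simp add: graph_on_def)
  have finU: "finite U" using finite_subset[OF UV fin] .
  define W where "W = dbl_V V"
  define A where "A = (V - U) \<times> {True}"
  define P where "P = perms (dbl_E E) W"
  define C where "C \<sigma> \<longleftrightarrow> (\<forall>z\<in>A. \<sigma> z = z)" for \<sigma> :: "'a \<times> bool \<Rightarrow> 'a \<times> bool"
  define Bad where "Bad \<sigma> \<longleftrightarrow> Q_set W swap_copy A \<sigma> \<inter> (B \<times> {True}) \<noteq> {}" for \<sigma>
  define S where "S = {\<sigma> \<in> P. C \<sigma>}"
  define PU where "PU = perms E U"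
  define PV where "PV = perms E V"
  define wt where "wt = weight \<alpha> W"
  define wU where "wU = weight \<alpha> U"
  define wV where "wV = weight \<alpha> V"
  define M where "M = sup_norm E V f"
  have AW: "A \<subseteq> W" using A_def W_def by (auto simp: dbl_V_def)
  have finW: "finite W" using fin by (simp add: W_def dbl_V_def)
  have finP: "finite P" unfolding P_def using finite_perms[OF finW] .
  have finS: "finite S" using finP by (simp add: S_def)
  have finPU: "finite PU" using finite_perms[OF finU] by (simp add: PU_def)
  have finPV: "finite PV" using finite_perms[OF fin] by (simp add: PV_def)
  have PUV: "PU \<subseteq> PV" using perms_mono[OF _ UV fin] by (auto simp: PU_def PV_def)
  have c1U: "cpy True \<sigma> \<in> PU" if "\<sigma> \<in> S" for \<sigma>
  proof -
    have "\<sigma> \<in> perms (dbl_E E) (dbl_V V)" "\<forall>x\<in>V-U. \<sigma> (x, True) = (x, True)"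
      using that by (auto simp: S_def P_def W_def C_def A_def)
    then show ?thesis unfolding PU_def by (rule cpy_perms[OF g UV])
  qed
  have c2V: "cpy False \<sigma> \<in> PV" if "\<sigma> \<in> P" for \<sigma>
  proof -
    have "\<sigma> \<in> perms (dbl_E E) (dbl_V V)" using that by (simp add: P_def W_def)
    then show ?thesis unfolding PV_def by (rule cpy_perms[OF g subset_refl]) simp
  qed
  have SP: "S \<subseteq> P" by (auto simp: S_def)
  have bij: "bij_betw (\<lambda>\<sigma>. (cpy True \<sigma>, cpy False \<sigma>)) S (PU \<times> PV)"
  proof (rule bij_betw_byWitness[where f' = "\<lambda>(p1, p2). joinp p1 p2"])
    show "\<forall>a\<in>S. (case (cpy True a, cpy False a) of (p1, p2) \<Rightarrow> joinp p1 p2) = a"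
      using joinp_cpy by (auto simp: S_def P_def W_def)
    show "\<forall>a'\<in>PU \<times> PV. (cpy True ((\<lambda>(p1, p2). joinp p1 p2) a'), cpy False ((\<lambda>(p1, p2). joinp p1 p2) a')) = a'"
      by (auto simp: cpy_joinp)
    show "(\<lambda>\<sigma>. (cpy True \<sigma>, cpy False \<sigma>)) ` S \<subseteq> PU \<times> PV" using c1U c2V SP by auto
    show "(\<lambda>(p1, p2). joinp p1 p2) ` (PU \<times> PV) \<subseteq> S"
    proof clarify
      fix p1 p2 assume p1: "p1 \<in> PU" and p2: "p2 \<in> PV"
      have p1V: "p1 \<in> perms E V" using p1 PUV by (auto simp: PV_def)
      have "joinp p1 p2 \<in> P" using joinp_perms[OF g p1V] p2 by (simp add: P_def W_def PV_def)
      moreover have "C (joinp p1 p2)"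
        using p1 by (auto simp: C_def A_def joinp_def PU_def perms_def)
      ultimately show "joinp p1 p2 \<in> S" by (simp add: S_def)
    qed
  qed
  have sumS: "(\<Sum>\<sigma>\<in>S. G (cpy True \<sigma>) (cpy False \<sigma>)) = (\<Sum>p1\<in>PU. \<Sum>p2\<in>PV. G p1 p2)" for G
    using sum.reindex_bij_betw[OF bij, of "case_prod G"] sum.cartesian_product[of G PV PU] by simp
  have wsplit: "wt \<sigma> = wU (cpy True \<sigma>) * wV (cpy False \<sigma>)" if "\<sigma> \<in> S" for \<sigma>
    using weight_split[OF g UV, of \<sigma> \<alpha>] that c1U[OF that] SP
    by (auto simp: wt_def wU_def wV_def W_def P_def PU_def)
  define ZU where "ZU = partfun E \<alpha> U"
  define ZV where "ZV = partfun E \<alpha> V"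
  have ZU: "ZU > 0" using partfun_pos[OF finU] by (simp add: ZU_def)
  have ZV: "ZV > 0" using partfun_pos[OF fin] by (simp add: ZV_def)
  have ZW: "partfun (dbl_E E) \<alpha> W > 0" using partfun_pos[OF finW] .
  define Zs where "Zs = (\<Sum>\<sigma>\<in>S. wt \<sigma>)"
  have Zs: "Zs = ZU * ZV"
  proof -
    have "Zs = (\<Sum>\<sigma>\<in>S. wU (cpy True \<sigma>) * wV (cpy False \<sigma>))"
      unfolding Zs_def by (rule sum.cong) (auto simp: wsplit)
    also have "\<dots> = (\<Sum>p1\<in>PU. \<Sum>p2\<in>PV. wU p1 * wV p2)" by (rule sumS)
    also have "\<dots> = ZU * ZV" by (simp add: sum_product ZU_def ZV_def partfun_def PU_def PV_def wU_def wV_def)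
    finally show ?thesis .
  qed
  define N1 where "N1 = (\<Sum>\<sigma>\<in>S. f (cpy True \<sigma>) * wt \<sigma>)"
  define N2 where "N2 = (\<Sum>\<sigma>\<in>S. f (cpy False \<sigma>) * wt \<sigma>)"
  have N1: "N1 = (\<Sum>p1\<in>PU. f p1 * wU p1) * ZV"
  proof -
    have "N1 = (\<Sum>\<sigma>\<in>S. (f (cpy True \<sigma>) * wU (cpy True \<sigma>)) * wV (cpy False \<sigma>))"
      unfolding N1_def by (rule sum.cong) (auto simp: wsplit)
    also have "\<dots> = (\<Sum>p1\<in>PU. \<Sum>p2\<in>PV. (f p1 * wU p1) * wV p2)" by (rule sumS)
    also have "\<dots> = (\<Sum>p1\<in>PU. f p1 * wU p1) * ZV"
      by (simp add: sum_product ZV_def partfun_def PV_def wV_def)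
    finally show ?thesis .
  qed
  have N2: "N2 = ZU * (\<Sum>p2\<in>PV. f p2 * wV p2)"
  proof -
    have "N2 = (\<Sum>\<sigma>\<in>S. wU (cpy True \<sigma>) * (f (cpy False \<sigma>) * wV (cpy False \<sigma>)))"
      unfolding N2_def by (rule sum.cong) (auto simp: wsplit)
    also have "\<dots> = (\<Sum>p1\<in>PU. \<Sum>p2\<in>PV. wU p1 * (f p2 * wV p2))" by (rule sumS)
    also have "\<dots> = ZU * (\<Sum>p2\<in>PV. f p2 * wV p2)"
      by (simp add: sum_product ZU_def partfun_def PU_def wU_def)
    finally show ?thesis .
  qed
  have diff: "expect E \<alpha> U f - expect E \<alpha> V f = (N1 - N2) / Zs"
    using ZU ZV unfolding Zs N1 N2
    by (simp add: expect_def ZU_def[symmetric] ZV_def[symmetric] PU_def[symmetric] PV_def[symmetric]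
        wU_def[symmetric] wV_def[symmetric] field_simps)
  define SB where "SB = {\<sigma> \<in> S. Bad \<sigma>}"
  define SN where "SN = {\<sigma> \<in> S. \<not> Bad \<sigma>}"
  have cp: "cond_prob (dbl_E E) \<alpha> (dbl_V V)
         (\<lambda>\<pi>. Q_set (dbl_V V) swap_copy ((V - U) \<times> {True}) \<pi> \<inter> (B \<times> {True}) \<noteq> {})
         (\<lambda>\<pi>. \<forall>z\<in>(V - U) \<times> {True}. \<pi> z = z) = (\<Sum>\<sigma>\<in>SB. wt \<sigma>) / Zs"
  proof -
    have e1: "{\<pi> \<in> perms (dbl_E E) (dbl_V V). Q_set (dbl_V V) swap_copy ((V - U) \<times> {True}) \<pi> \<inter> (B \<times> {True}) \<noteq> {}
        \<and> (\<forall>z\<in>(V - U) \<times> {True}. \<pi> z = z)} = SB"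
      by (auto simp: SB_def S_def P_def W_def Bad_def C_def A_def)
    have e2: "{\<pi> \<in> perms (dbl_E E) (dbl_V V). \<forall>z\<in>(V - U) \<times> {True}. \<pi> z = z} = S"
      by (auto simp: S_def P_def W_def C_def A_def)
    show ?thesis using ZW unfolding cond_prob_def prob_ev_def e1 e2
      by (simp add: Zs_def wt_def W_def)
  qed
  define gg where "gg \<sigma> = (f (cpy True \<sigma>) - f (cpy False \<sigma>)) * wt \<sigma>" for \<sigma>
  have N12: "N1 - N2 = (\<Sum>\<sigma>\<in>S. gg \<sigma>)"
    by (simp add: N1_def N2_def gg_def sum_subtractf left_diff_distrib)
  have Sun: "S = SB \<union> SN" and Sdis: "SB \<inter> SN = {}" by (auto simp: SB_def SN_def)
  have finSB: "finite SB" and finSN: "finite SN" using finS by (auto simp: SB_def SN_def)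
  have split: "(\<Sum>\<sigma>\<in>S. gg \<sigma>) = (\<Sum>\<sigma>\<in>SB. gg \<sigma>) + (\<Sum>\<sigma>\<in>SN. gg \<sigma>)"
    unfolding Sun by (rule sum.union_disjoint[OF finSB finSN Sdis])
  let ?T = "Tmap W A"
  have Tprops: "?T \<sigma> \<in> SN \<and> ?T (?T \<sigma>) = \<sigma> \<and> gg (?T \<sigma>) = - gg \<sigma>" if s: "\<sigma> \<in> SN" for \<sigma>
  proof -
    have sP: "\<sigma> \<in> perms (dbl_E E) (dbl_V V)" and Cs: "C \<sigma>" and nb: "\<not> Bad \<sigma>"
      using s by (auto simp: SN_def S_def P_def W_def)
    have AW': "A \<subseteq> dbl_V V" using AW by (simp add: W_def)
    have Tp: "?T \<sigma> \<in> P" using T_perm[OF fin AW' sP] by (simp add: P_def W_def)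
    have TC: "C (?T \<sigma>)" using T_fix[OF fin AW' sP] Cs by (simp add: C_def W_def)
    have TQ: "Q_set W swap_copy A (?T \<sigma>) = Q_set W swap_copy A \<sigma>" using T_Q[OF fin AW' sP] by (simp add: W_def)
    have TB: "\<not> Bad (?T \<sigma>)" using nb TQ by (simp add: Bad_def)
    have TT: "?T (?T \<sigma>) = \<sigma>" using T_T[OF fin AW' sP] by (simp add: W_def)
    have Tw: "wt (?T \<sigma>) = wt \<sigma>" using T_weight[OF fin AW' sP] by (simp add: wt_def W_def)
    have nbq: "Q_set (dbl_V V) swap_copy A \<sigma> \<inter> (B \<times> {True}) = {}" using nb by (simp add: Bad_def W_def)
    have f1: "f (cpy True (?T \<sigma>)) = f (cpy False \<sigma>)"
      using key_f[OF g AW' sP nbq m] by (simp add: W_def)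
    have sP2: "?T \<sigma> \<in> perms (dbl_E E) (dbl_V V)" using Tp by (simp add: P_def W_def)
    have nbq2: "Q_set (dbl_V V) swap_copy A (?T \<sigma>) \<inter> (B \<times> {True}) = {}" using TB by (simp add: Bad_def W_def)
    have f2: "f (cpy True (?T (?T \<sigma>))) = f (cpy False (?T \<sigma>))"
      using key_f[OF g AW' sP2 nbq2 m] by (simp add: W_def)
    have "?T \<sigma> \<in> SN" using Tp TC TB by (simp add: SN_def S_def)
    moreover have "gg (?T \<sigma>) = - gg \<sigma>" using f1 f2 TT Tw by (simp add: gg_def algebra_simps)
    ultimately show ?thesis using TT by simp
  qed
  have bT: "bij_betw ?T SN SN"
    by (rule bij_betw_byWitness[where f' = ?T]) (use Tprops in auto)
  have "(\<Sum>\<sigma>\<in>SN. gg \<sigma>) = (\<Sum>\<sigma>\<in>SN. gg (?T \<sigma>))" using sum.reindex_bij_betw[OF bT, of gg] by simp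
  also have "\<dots> = - (\<Sum>\<sigma>\<in>SN. gg \<sigma>)" using Tprops by (simp add: sum_negf)
  finally have zero: "(\<Sum>\<sigma>\<in>SN. gg \<sigma>) = 0" by simp
  have fM: "\<bar>f p\<bar> \<le> M" if "p \<in> PV" for p
    unfolding M_def sup_norm_def PV_def[symmetric] using finPV that by (auto intro: Max_ge)
  have gb: "\<bar>gg \<sigma>\<bar> \<le> 2 * M * wt \<sigma>" if "\<sigma> \<in> SB" for \<sigma>
  proof -
    have s: "\<sigma> \<in> S" using that by (simp add: SB_def)
    have a: "\<bar>f (cpy True \<sigma>)\<bar> \<le> M" using fM c1U[OF s] PUV by auto
    have b: "\<bar>f (cpy False \<sigma>)\<bar> \<le> M" using fM c2V s SP by auto
    have w: "wt \<sigma> > 0" by (simp add: wt_def weight_pos)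
    have "\<bar>gg \<sigma>\<bar> = \<bar>f (cpy True \<sigma>) - f (cpy False \<sigma>)\<bar> * wt \<sigma>" using w by (simp add: gg_def abs_mult)
    also have "\<dots> \<le> 2 * M * wt \<sigma>" using a b w by (intro mult_right_mono) auto
    finally show ?thesis .
  qed
  have "\<bar>\<Sum>\<sigma>\<in>SB. gg \<sigma>\<bar> \<le> (\<Sum>\<sigma>\<in>SB. \<bar>gg \<sigma>\<bar>)" by (rule sum_abs)
  also have "\<dots> \<le> (\<Sum>\<sigma>\<in>SB. 2 * M * wt \<sigma>)" by (rule sum_mono) (use gb in auto)
  also have "\<dots> = 2 * M * (\<Sum>\<sigma>\<in>SB. wt \<sigma>)" by (simp add: sum_distrib_left)
  finally have bound: "\<bar>\<Sum>\<sigma>\<in>SB. gg \<sigma>\<bar> \<le> 2 * M * (\<Sum>\<sigma>\<in>SB. wt \<sigma>)" .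
  have Zpos: "Zs > 0" using Zs ZU ZV by simp
  have "\<bar>expect E \<alpha> U f - expect E \<alpha> V f\<bar> = \<bar>\<Sum>\<sigma>\<in>SB. gg \<sigma>\<bar> / Zs"
    using diff N12 split zero Zpos by simp
  also have "\<dots> \<le> 2 * M * (\<Sum>\<sigma>\<in>SB. wt \<sigma>) / Zs" using bound Zpos by (simp add: divide_right_mono)
  finally show ?thesis using cp by (simp add: M_def)
qed


end
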